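(* Every monotonically normal, $nwd$-separable space is $D$-separable.
   Context: A space is $nwd$-separable if it has a dense subset which is a countable union of nowhere dense sets. A space $X$ is $D$-separable if for every sequence $\{D_n:n<\omega\}$ of dense subsets of $X$ there are discrete sets $E_n\subseteq D_n$ with $\bigcup_{n<\omega}E_n$ dense in $X$. *)

theory Defs
  imports "HOL-Analysis.Analysis"
begin

definition dense_in_top :: "'a topology \<Rightarrow> 'a set \<Rightarrow> bool" where
  "dense_in_top X D \<longleftrightarrow> D \<subseteq> topspace X \<and> X closure_of D = topspace X"

definition nowhere_dense_in :: "'a topology \<Rightarrow> 'a set \<Rightarrow> bool" where
  "nowhere_dense_in X N \<longleftrightarrow> N \<subseteq> topspace X \<and> X interior_of (X closure_of N) = {}"

definition discrete_in :: "'a topology \<Rightarrow> 'a set \<Rightarrow> bool" where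
  "discrete_in X E \<longleftrightarrow> E \<subseteq> topspace X \<and> (\<forall>x\<in>E. \<exists>U. openin X U \<and> U \<inter> E = {x})"

definition monotonically_normal :: "'a topology \<Rightarrow> bool" where
  "monotonically_normal X \<longleftrightarrow> t1_space X \<and>
     (\<exists>H :: 'a \<Rightarrow> 'a set \<Rightarrow> 'a set.
        (\<forall>x U. openin X U \<and> x \<in> U \<longrightarrow> openin X (H x U) \<and> x \<in> H x U \<and> H x U \<subseteq> U) \<and>
        (\<forall>x U y V. openin X U \<and> x \<in> U \<and> openin X V \<and> y \<in> V \<and> H x U \<inter> H y V \<noteq> {}
                    \<longrightarrow> x \<in> V \<or> y \<in> U))"

definition nwd_separable :: "'a topology \<Rightarrow> bool" where
  "nwd_separable X \<longleftrightarrow> (\<exists>F. countable F \<and> (\<forall>N\<in>F. nowhere_dense_in X N) \<and> dense_in_top X (\<Union>F))"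

definition D_separable :: "'a topology \<Rightarrow> bool" where
  "D_separable X \<longleftrightarrow> (\<forall>D :: nat \<Rightarrow> 'a set. (\<forall>n. dense_in_top X (D n)) \<longrightarrow>
     (\<exists>E :: nat \<Rightarrow> 'a set. (\<forall>n. E n \<subseteq> D n \<and> discrete_in X (E n)) \<and> dense_in_top X (\<Union>n. E n)))"

end

theory Submission
  imports Defs
begin

lemma key:
  assumes H1: "\<forall>x U. openin X U \<and> x \<in> U \<longrightarrow> openin X (H x U) \<and> x \<in> H x U \<and> H x U \<subseteq> U"
    and H2: "\<forall>x U y V. openin X U \<and> x \<in> U \<and> openin X V \<and> y \<in> V \<and> H x U \<inter> H y V \<noteq> {}
                    \<longrightarrow> x \<in> V \<or> y \<in> U"
    and D: "dense_in_top X D" and N: "nowhere_dense_in X N"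
  shows "\<exists>E. E \<subseteq> D \<and> discrete_in X E \<and> N \<subseteq> X closure_of E"
proof -
  define W where "W = topspace X - X closure_of N"
  have Wopen: "openin X W" unfolding W_def by (simp add: openin_diff)
  define A where "A = {P. P \<subseteq> {(e,U). e \<in> D \<and> openin X U \<and> e \<in> U \<and> U \<subseteq> W} \<and>
     (\<forall>p\<in>P. \<forall>q\<in>P. p \<noteq> q \<longrightarrow> H (fst p) (snd p) \<inter> H (fst q) (snd q) = {})}"
  have "\<forall>C\<in>chains A. \<Union>C \<in> A"
  proof
    fix C assume C: "C \<in> chains A"
    hence CA: "C \<subseteq> A" and ch: "chain\<^sub>\<subseteq> C" by (auto simp: chains_def)
    show "\<Union>C \<in> A" unfolding A_def
    proof (intro CollectI conjI ballI impI)
      show "\<Union>C \<subseteq> {(e,U). e \<in> D \<and> openin X U \<and> e \<in> U \<and> U \<subseteq> W}"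
        using CA unfolding A_def by blast
    next
      fix p q assume p: "p \<in> \<Union>C" and q: "q \<in> \<Union>C" and ne: "p \<noteq> q"
      then obtain P Q where P: "P \<in> C" "p \<in> P" and Q: "Q \<in> C" "q \<in> Q" by blast
      from ch P Q have "P \<subseteq> Q \<or> Q \<subseteq> P" by (auto simp: chain_subset_def)
      then obtain R where "R \<in> A" "p \<in> R" "q \<in> R" using P Q CA by blast
      thus "H (fst p) (snd p) \<inter> H (fst q) (snd q) = {}" using ne unfolding A_def by blast
    qed
  qed
  then obtain M where MA: "M \<in> A" and Mmax: "\<forall>P\<in>A. M \<subseteq> P \<longrightarrow> P = M"
    using Zorn_Lemma by blast
  have Mprop: "\<And>e U. (e,U) \<in> M \<Longrightarrow> e \<in> D \<and> openin X U \<and> e \<in> U \<and> U \<subseteq> W"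
    using MA unfolding A_def by blast
  have Mdisj: "\<And>p q. p \<in> M \<Longrightarrow> q \<in> M \<Longrightarrow> p \<noteq> q \<Longrightarrow> H (fst p) (snd p) \<inter> H (fst q) (snd q) = {}"
    using MA unfolding A_def by blast
  have Dsub: "D \<subseteq> topspace X" and Dcl: "X closure_of D = topspace X"
    using D unfolding dense_in_top_def by auto
  have Nsub: "N \<subseteq> topspace X" and Nint: "X interior_of (X closure_of N) = {}"
    using N unfolding nowhere_dense_in_def by auto
  define E where "E = fst ` M"
  have ED: "E \<subseteq> D" unfolding E_def using Mprop by force
  have disc: "discrete_in X E"
    unfolding discrete_in_def
  proof (intro conjI ballI)
    show "E \<subseteq> topspace X" using ED Dsub by blast
  next
    fix e assume "e \<in> E"
    then obtain U where eU: "(e,U) \<in> M" unfolding E_def by force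
    have P: "openin X (H e U)" "e \<in> H e U" using H1 Mprop[OF eU] by auto
    have "H e U \<inter> E = {e}"
    proof
      show "{e} \<subseteq> H e U \<inter> E" using P \<open>e \<in> E\<close> by blast
    next
      show "H e U \<inter> E \<subseteq> {e}"
      proof
        fix e' assume e': "e' \<in> H e U \<inter> E"
        then obtain U' where eU': "(e',U') \<in> M" unfolding E_def by force
        have "e' \<in> H e' U'" using H1 Mprop[OF eU'] by auto
        hence "(e',U') = (e,U)" using Mdisj[OF eU' eU] e' by auto
        thus "e' \<in> {e}" by simp
      qed
    qed
    thus "\<exists>U. openin X U \<and> U \<inter> E = {e}" using P by blast
  qed
  have "N \<subseteq> X closure_of E"
  proof
    fix x assume xN: "x \<in> N"
    have xtop: "x \<in> topspace X" using xN Nsub by blast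
    have xnW: "x \<notin> W" using xN Nsub closure_of_subset unfolding W_def by blast
    show "x \<in> X closure_of E"
      unfolding in_closure_of
    proof (intro conjI xtop allI impI)
      fix V assume V: "x \<in> V \<and> openin X V"
      show "\<exists>y. y \<in> E \<and> y \<in> V"
      proof (rule ccontr)
        assume nE: "\<not> (\<exists>y. y \<in> E \<and> y \<in> V)"
        have HV: "openin X (H x V)" "x \<in> H x V" "H x V \<subseteq> V" using H1 V by auto
        define Ob where "Ob = H x V \<inter> W"
        have Oopen: "openin X Ob" unfolding Ob_def using HV Wopen by auto
        have "Ob \<noteq> {}"
        proof
          assume "Ob = {}"
          hence "H x V \<subseteq> X closure_of N"
            using openin_subset[OF HV(1)] unfolding Ob_def W_def by blast
          hence "H x V \<subseteq> X interior_of (X closure_of N)"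
            using HV(1) interior_of_maximal by blast
          thus False using Nint HV(2) by blast
        qed
        then obtain z where zO: "z \<in> Ob" by blast
        have "z \<in> X closure_of D" using Dcl zO openin_subset[OF Oopen] by blast
        then obtain d where dD: "d \<in> D" and dO: "d \<in> Ob"
          using zO Oopen unfolding in_closure_of by blast
        show False
        proof (cases "\<exists>p\<in>M. H (fst p) (snd p) \<inter> Ob \<noteq> {}")
          case True
          then obtain e U where eU: "(e,U) \<in> M" and ne: "H e U \<inter> Ob \<noteq> {}" by force
          have "H x V \<inter> H e U \<noteq> {}" using ne unfolding Ob_def by blast
          hence "x \<in> U \<or> e \<in> V" using H2 V Mprop[OF eU] by blast
          moreover have "e \<in> E" using eU unfolding E_def by force
          ultimately show False using nE Mprop[OF eU] xnW by blast
        next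
          case False
          have OW: "Ob \<subseteq> W" unfolding Ob_def by blast
          have HdO: "H d Ob \<subseteq> Ob" "d \<in> H d Ob" using H1 Oopen dO by auto
          have new: "M \<union> {(d,Ob)} \<in> A"
            unfolding A_def
          proof (intro CollectI conjI ballI impI)
            show "M \<union> {(d, Ob)} \<subseteq> {(e, U). e \<in> D \<and> openin X U \<and> e \<in> U \<and> U \<subseteq> W}"
              using Mprop dD Oopen dO OW by auto
          next
            fix p q assume pq: "p \<in> M \<union> {(d, Ob)}" "q \<in> M \<union> {(d, Ob)}" "p \<noteq> q"
            show "H (fst p) (snd p) \<inter> H (fst q) (snd q) = {}"
            proof (cases "p \<in> M")
              case pM: True
              show ?thesis
              proof (cases "q \<in> M")
                case True thus ?thesis using Mdisj pM pq(3) by blast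
              next
                case qn: False
                hence "q = (d,Ob)" using pq by blast
                thus ?thesis using False pM HdO by auto
              qed
            next
              case pn: False
              hence p: "p = (d,Ob)" using pq by blast
              hence "q \<in> M" using pq by blast
              thus ?thesis using False p HdO by auto
            qed
          qed
          have "M \<union> {(d,Ob)} = M" using Mmax new by blast
          hence "(d,Ob) \<in> M" by blast
          thus False using False HdO by force
        qed
      qed
    qed
  qed
  thus ?thesis using ED disc by blast
qed

theorem theorem6p7:
  fixes X :: "'a topology"
  assumes "monotonically_normal X" and "nwd_separable X"
  shows "D_separable X"
proof -
  have "\<exists>H :: 'a \<Rightarrow> 'a set \<Rightarrow> 'a set.
        (\<forall>x U. openin X U \<and> x \<in> U \<longrightarrow> openin X (H x U) \<and> x \<in> H x U \<and> H x U \<subseteq> U) \<and>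
        (\<forall>x U y V. openin X U \<and> x \<in> U \<and> openin X V \<and> y \<in> V \<and> H x U \<inter> H y V \<noteq> {}
                    \<longrightarrow> x \<in> V \<or> y \<in> U)"
    using assms(1) unfolding monotonically_normal_def by (rule conjunct2)
  then obtain H :: "'a \<Rightarrow> 'a set \<Rightarrow> 'a set" where
    HH: "(\<forall>x U. openin X U \<and> x \<in> U \<longrightarrow> openin X (H x U) \<and> x \<in> H x U \<and> H x U \<subseteq> U) \<and>
    (\<forall>x U y V. openin X U \<and> x \<in> U \<and> openin X V \<and> y \<in> V \<and> H x U \<inter> H y V \<noteq> {}
                    \<longrightarrow> x \<in> V \<or> y \<in> U)"
    by (rule exE)
  note H1 = conjunct1[OF HH] and H2 = conjunct2[OF HH]
  have "\<exists>F. countable F \<and> (\<forall>N\<in>F. nowhere_dense_in X N) \<and> dense_in_top X (\<Union>F)"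
    using assms(2) unfolding nwd_separable_def .
  then obtain F where FF: "countable F \<and> (\<forall>N\<in>F. nowhere_dense_in X N) \<and> dense_in_top X (\<Union>F)"
    by (rule exE)
  have Fc: "countable F" and FN: "\<forall>N\<in>F. nowhere_dense_in X N"
    and Fd: "dense_in_top X (\<Union>F)" using FF by simp_all
  show ?thesis
    unfolding D_separable_def
  proof (intro allI impI)
    fix D :: "nat \<Rightarrow> 'a set" assume Dd: "\<forall>n. dense_in_top X (D n)"
    show "\<exists>E. (\<forall>n. E n \<subseteq> D n \<and> discrete_in X (E n)) \<and> dense_in_top X (\<Union>n. E n)"
    proof (cases "F = {}")
      case True
      hence "topspace X = {}" using Fd unfolding dense_in_top_def by simp
      hence "(\<forall>n. (\<lambda>n. {}) n \<subseteq> D n \<and> discrete_in X ((\<lambda>n. {}) n)) \<and> dense_in_top X (\<Union>n. (\<lambda>n. {}) n)"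
        unfolding dense_in_top_def discrete_in_def by simp
      thus ?thesis by (rule exI[where x="\<lambda>n. {}"])
    next
      case False
      define Nf where "Nf = from_nat_into F"
      have rng: "range Nf = F" unfolding Nf_def using range_from_nat_into[OF False Fc] .
      have "\<forall>n. \<exists>E. E \<subseteq> D n \<and> discrete_in X E \<and> Nf n \<subseteq> X closure_of E"
      proof
        fix n
        have "Nf n \<in> F" using rng by blast
        hence nd: "nowhere_dense_in X (Nf n)" using FN by simp
        have dn: "dense_in_top X (D n)" using Dd by simp
        show "\<exists>E. E \<subseteq> D n \<and> discrete_in X E \<and> Nf n \<subseteq> X closure_of E"
          by (rule key[OF H1 H2 dn nd])
      qed
      then obtain E where E: "\<forall>n. E n \<subseteq> D n \<and> discrete_in X (E n) \<and> Nf n \<subseteq> X closure_of (E n)"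
        using choice[of "\<lambda>n E. E \<subseteq> D n \<and> discrete_in X E \<and> Nf n \<subseteq> X closure_of E"] by blast
      have Esub: "(\<Union>n. E n) \<subseteq> topspace X"
      proof
        fix y assume "y \<in> (\<Union>n. E n)"
        then obtain n where "y \<in> E n" by blast
        moreover have "E n \<subseteq> topspace X" using E unfolding discrete_in_def by simp
        ultimately show "y \<in> topspace X" by blast
      qed
      have "\<Union>F \<subseteq> X closure_of (\<Union>n. E n)"
      proof
        fix y assume "y \<in> \<Union>F"
        then obtain n where "y \<in> Nf n" using rng by blast
        hence "y \<in> X closure_of E n" using E by blast
        moreover have "X closure_of E n \<subseteq> X closure_of (\<Union>n. E n)"
          by (rule closure_of_mono) blast
        ultimately show "y \<in> X closure_of (\<Union>n. E n)" by blast
      qed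
      hence "X closure_of (\<Union>F) \<subseteq> X closure_of (X closure_of (\<Union>n. E n))"
        by (rule closure_of_mono)
      hence "X closure_of (\<Union>F) \<subseteq> X closure_of (\<Union>n. E n)"
        by (simp add: closure_of_closure_of)
      moreover have "X closure_of (\<Union>F) = topspace X" using Fd unfolding dense_in_top_def by simp
      moreover have "X closure_of (\<Union>n. E n) \<subseteq> topspace X" by (rule closure_of_subset_topspace)
      ultimately have "X closure_of (\<Union>n. E n) = topspace X" by blast
      hence "(\<forall>n. E n \<subseteq> D n \<and> discrete_in X (E n)) \<and> dense_in_top X (\<Union>n. E n)"
        using E Esub unfolding dense_in_top_def by blast
      thus ?thesis by (rule exI[where x=E])
    qed
  qed
qed

end
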